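(* The $\Sigma_1$-theory $\mathcal{T}_\varsigma$ is not smooth with respect to $\{\sigma\}$.
   Context: $\varsigma:\mathbb{N}\to\mathbb{N}$ is the Busy Beaver function: $\varsigma(n)$ is the maximum number of $1$'s that a halting Turing machine with at most $n$ states can leave on its tape, starting from an all-$0$ tape. $\Sigma_1$ is the empty signature (only equality, interpreted as identity) with one sort $\sigma$. Let $\psi_{\ge n}=\exists x_1\dots x_n.\bigwedge_{1\le i<j\le n}\neg(x_i=x_j)$, $\psi_{\le n}=\exists x_1\dots x_n\forall y.\bigvee_{i=1}^n y=x_i$, $\psi_{=n}=\psi_{\ge n}\wedge\psi_{\le n}$. $\mathcal{T}_\varsigma$ is the $\Sigma_1$-theory (class of all $\Sigma_1$-interpretations satisfying the axioms) axiomatized by $\{\psi_{\ge\varsigma(k+2)}\vee\bigvee_{i=2}^{k+2}\psi_{=\varsigma(i)}:k\in\mathbb{N}\}$. A theory $\mathcal{T}$ is smooth w.r.t. $\{\sigma\}$ if for every quantifier-free formula $\phi$, every $\mathcal{T}$-interpretation $\mathcal{A}$ satisfying $\phi$, and every cardinal $\kappa\ge|\sigma^{\mathcal{A}}|$, some $\mathcal{T}$-interpretation $\mathcal{B}$ satisfies $\phi$ with $|\sigma^{\mathcal{B}}|=\kappa$. *)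

theory Defs
  imports Main "HOL-Library.Equipollence"
begin

text \<open>Two-symbol (0 = False, 1 = True) Turing machines on a two-way infinite tape
  (indexed by int). A machine with m states has states 1..m and the halting
  state 0; state 1 is the start state. The transition table maps (state, read
  symbol) to (written symbol, move right?, next state).\<close>

type_synonym tm = "nat \<Rightarrow> bool \<Rightarrow> bool \<times> bool \<times> nat"
type_synonym tm_config = "nat \<times> int \<times> (int \<Rightarrow> bool)"

definition tm_valid :: "nat \<Rightarrow> tm \<Rightarrow> bool" where
  "tm_valid m M \<longleftrightarrow> (\<forall>q\<in>{1..m}. \<forall>s. snd (snd (M q s)) \<le> m)"

definition tm_step :: "tm \<Rightarrow> tm_config \<Rightarrow> tm_config" where
  "tm_step M c = (case c of (q, h, t) \<Rightarrow>
     if q = 0 then (q, h, t)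
     else (case M q (t h) of (w, d, q') \<Rightarrow>
             (q', if d then h + 1 else h - 1, t(h := w))))"

definition tm_run :: "tm \<Rightarrow> nat \<Rightarrow> tm_config" where
  "tm_run M k = (tm_step M ^^ k) (1, 0, (\<lambda>_. False))"

definition tm_ones :: "tm_config \<Rightarrow> nat" where
  "tm_ones c = card {i. snd (snd c) i}"

text \<open>Busy Beaver: maximum number of 1's left by a halting machine with at most n states
  started on the all-0 tape (the 0-state case contributes 0).\<close>
definition busy_beaver :: "nat \<Rightarrow> nat" where
  "busy_beaver n = Max ({0} \<union> {tm_ones (tm_run M k) | m M k.
       1 \<le> m \<and> m \<le> n \<and> tm_valid m M \<and> fst (tm_run M k) = 0})"

datatype qf_formula = QEq nat nat | QNot qf_formula | QAnd qf_formula qf_formula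
  | QOr qf_formula qf_formula

fun qf_sat :: "(nat \<Rightarrow> 'a) \<Rightarrow> qf_formula \<Rightarrow> bool" where
  "qf_sat v (QEq x y) = (v x = v y)"
| "qf_sat v (QNot p) = (\<not> qf_sat v p)"
| "qf_sat v (QAnd p q) = (qf_sat v p \<and> qf_sat v q)"
| "qf_sat v (QOr p q) = (qf_sat v p \<or> qf_sat v q)"

definition is_interp :: "'a set \<Rightarrow> (nat \<Rightarrow> 'a) \<Rightarrow> bool" where
  "is_interp D v \<longleftrightarrow> D \<noteq> {} \<and> range v \<subseteq> D"

text \<open>Semantics of the cardinality sentences (literal unfolding).\<close>
definition psi_ge :: "'a set \<Rightarrow> nat \<Rightarrow> bool" where
  "psi_ge D n \<longleftrightarrow> (\<exists>x. (\<forall>i\<in>{1..n}. x i \<in> D) \<and> inj_on x {1..n})"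

definition psi_le :: "'a set \<Rightarrow> nat \<Rightarrow> bool" where
  "psi_le D n \<longleftrightarrow> (\<exists>x. (\<forall>i\<in>{1..n}. x i \<in> D) \<and> (\<forall>y\<in>D. \<exists>i\<in>{1..n}. y = x i))"

definition psi_eq :: "'a set \<Rightarrow> nat \<Rightarrow> bool" where
  "psi_eq D n \<longleftrightarrow> psi_ge D n \<and> psi_le D n"

definition T_bb_interp :: "'a set \<Rightarrow> (nat \<Rightarrow> 'a) \<Rightarrow> bool" where
  "T_bb_interp D v \<longleftrightarrow> is_interp D v \<and>
     (\<forall>k::nat. psi_ge D (busy_beaver (k + 2)) \<or>
               (\<exists>i\<in>{2..k+2}. psi_eq D (busy_beaver i)))"

text \<open>Smoothness w.r.t. the single sort, relative to interpretations whose domains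
  live in the type 'a; cardinals are represented by subsets K of 'a.\<close>
definition smooth_T_bb :: "'a itself \<Rightarrow> bool" where
  "smooth_T_bb _ \<longleftrightarrow>
     (\<forall>\<phi> (D::'a set) v. T_bb_interp D v \<and> qf_sat v \<phi> \<longrightarrow>
        (\<forall>K::'a set. D \<lesssim> K \<longrightarrow>
           (\<exists>(D'::'a set) v'. T_bb_interp D' v' \<and> qf_sat v' \<phi> \<and> D' \<approx> K)))"

end

theory Submission
  imports Defs "HOL-Library.FuncSet"
begin

lemma step_halted: "fst c = 0 \<Longrightarrow> tm_step M c = c"
  by (cases c) (auto simp: tm_step_def)

lemma funpow_halted: "fst c = 0 \<Longrightarrow> (tm_step M ^^ j) c = c"
  by (induction j) (auto simp: step_halted)

lemma run_add: "tm_run M (k + j) = (tm_step M ^^ j) (tm_run M k)"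
  by (simp add: tm_run_def funpow_add add.commute)

lemma run_halted_unique:
  assumes "fst (tm_run M k) = 0" "fst (tm_run M k') = 0"
  shows "tm_run M k = tm_run M k'"
proof -
  have *: "tm_run M j = tm_run M i" if h0: "fst (tm_run M i) = 0" and ij: "i \<le> j" for i j
  proof -
    obtain d where "j = i + d" using ij le_Suc_ex by blast
    then show ?thesis using h0 by (simp add: run_add funpow_halted)
  qed
  show ?thesis
  proof (cases "k \<le> k'")
    case True then show ?thesis using *[OF assms(1), of k'] by (simp only:)
  next
    case False then have "k' \<le> k" by simp
    then show ?thesis using *[OF assms(2), of k] by (simp only:)
  qed
qed

lemma run_state_bound:
  assumes "tm_valid m M" "1 \<le> m"
  shows "fst (tm_run M k) \<le> m"
proof (induction k)
  case 0
  then show ?case using assms by (simp add: tm_run_def)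
next
  case (Suc k)
  obtain q h t where c: "tm_run M k = (q, h, t)" by (cases "tm_run M k") auto
  have r: "tm_run M (Suc k) = tm_step M (q, h, t)"
    using c by (simp add: tm_run_def)
  show ?case
  proof (cases "q = 0")
    case True then show ?thesis using r by (simp add: tm_step_def)
  next
    case False
    then have "q \<in> {1..m}" using Suc c by auto
    then have "snd (snd (M q (t h))) \<le> m" using assms by (auto simp: tm_valid_def)
    then show ?thesis using r False
      by (auto simp: tm_step_def split: prod.splits)
  qed
qed

definition restr :: "nat \<Rightarrow> tm \<Rightarrow> tm" where
  "restr m M = (\<lambda>q. if q \<in> {1..m} then M q else undefined)"

lemma step_restr:
  assumes "fst c \<le> m"
  shows "tm_step (restr m M) c = tm_step M c"
proof -
  obtain q h t where c: "c = (q, h, t)" by (cases c) auto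
  show ?thesis
  proof (cases "q = 0")
    case True then show ?thesis using c by (simp add: tm_step_def)
  next
    case False
    then have "restr m M q = M q" using assms c by (simp add: restr_def)
    then show ?thesis using c False by (simp add: tm_step_def)
  qed
qed

lemma run_restr:
  assumes "tm_valid m M" "1 \<le> m"
  shows "tm_run (restr m M) k = tm_run M k"
proof (induction k)
  case 0 then show ?case by (simp add: tm_run_def)
next
  case (Suc k)
  have "tm_run (restr m M) (Suc k) = tm_step (restr m M) (tm_run (restr m M) k)"
    by (simp add: tm_run_def)
  also have "\<dots> = tm_step (restr m M) (tm_run M k)" using Suc by simp
  also have "\<dots> = tm_step M (tm_run M k)"
    using step_restr run_state_bound[OF assms] by blast
  also have "\<dots> = tm_run M (Suc k)" by (simp add: tm_run_def)
  finally show ?case .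
qed

lemma restr_in:
  assumes "tm_valid m M"
  shows "restr m M \<in> (\<Pi>\<^sub>E q\<in>{1..m}. (\<Pi>\<^sub>E s\<in>(UNIV::bool set). (UNIV::bool set) \<times> (UNIV::bool set) \<times> {0..m}))"
  using assms unfolding restr_def tm_valid_def PiE_def Pi_def extensional_def
  by (auto simp: mem_Times_iff)

lemma finite_machines:
  "finite (\<Pi>\<^sub>E q\<in>{1..m}. (\<Pi>\<^sub>E s\<in>(UNIV::bool set). (UNIV::bool set) \<times> (UNIV::bool set) \<times> {0..(m::nat)}))"
  by (intro finite_PiE) auto

definition hc :: "tm \<Rightarrow> nat" where
  "hc R = tm_ones (tm_run R (LEAST k. fst (tm_run R k) = 0))"

lemma bb_set_finite:
  "finite {tm_ones (tm_run M k) | m M k.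
       1 \<le> m \<and> m \<le> n \<and> tm_valid m M \<and> fst (tm_run M k) = 0}" (is "finite ?S")
proof -
  let ?F = "\<lambda>m. (\<Pi>\<^sub>E q\<in>{1..m}. (\<Pi>\<^sub>E s\<in>(UNIV::bool set). (UNIV::bool set) \<times> (UNIV::bool set) \<times> {0..(m::nat)}))"
  have "?S \<subseteq> (\<Union>m\<in>{1..n}. hc ` ?F m)"
  proof
    fix x assume "x \<in> ?S"
    then obtain m M k where x: "x = tm_ones (tm_run M k)" and m: "1 \<le> m" "m \<le> n"
      and v: "tm_valid m M" and hk: "fst (tm_run M k) = 0" by blast
    let ?R = "restr m M"
    have e: "tm_run ?R j = tm_run M j" for j using run_restr[OF v m(1)] .
    have hk': "fst (tm_run ?R k) = 0" using hk e by simp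
    have "fst (tm_run ?R (LEAST k. fst (tm_run ?R k) = 0)) = 0"
      by (rule LeastI[of _ k]) (rule hk')
    then have "tm_run ?R (LEAST k. fst (tm_run ?R k) = 0) = tm_run ?R k"
      using run_halted_unique hk' by blast
    then have "x = hc ?R" unfolding hc_def x using e by simp
    moreover have "?R \<in> ?F m" using restr_in[OF v] .
    ultimately have "x \<in> hc ` ?F m" by blast
    then show "x \<in> (\<Union>m\<in>{1..n}. hc ` ?F m)" using m by (intro UN_I[of m]) auto
  qed
  moreover have "finite (\<Union>m\<in>{1..n}. hc ` ?F m)"
    using finite_machines by auto
  ultimately show ?thesis by (rule finite_subset)
qed

lemma bb_ge:
  assumes "1 \<le> m" "m \<le> n" "tm_valid m M" "fst (tm_run M k) = 0"
  shows "tm_ones (tm_run M k) \<le> busy_beaver n"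
  unfolding busy_beaver_def
  by (rule Max_ge) (use bb_set_finite[of n] assms in blast)+

definition reach :: "tm \<Rightarrow> tm_config \<Rightarrow> tm_config \<Rightarrow> bool" where
  "reach M c c' \<longleftrightarrow> (\<exists>n. (tm_step M ^^ n) c = c')"

lemma reach_refl: "reach M c c"
  unfolding reach_def by (rule exI[of _ 0]) simp

lemma reach_trans: "reach M a b \<Longrightarrow> reach M b c \<Longrightarrow> reach M a c"
  unfolding reach_def by (metis funpow_add comp_apply)

lemma reach_step:
  assumes "q \<noteq> 0" "M q (t h) = (w, d, q')"
  shows "reach M (q, h, t) (q', if d then h + 1 else h - 1, t(h := w))"
  unfolding reach_def using assms
  by (intro exI[of _ 1]) (simp add: tm_step_def)

lemma reach_step':
  assumes "q \<noteq> 0" "M q (t h) = (w, d, q')" "h' = (if d then h + 1 else h - 1)" "t' = t(h := w)"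
  shows "reach M (q, h, t) (q', h', t')"
  using reach_step[of q M t h w d q'] assms by simp

lemma reach_step_trans:
  assumes "q \<noteq> 0" "M q (t h) = (w, d, q')"
    "reach M (q', if d then h + 1 else h - 1, t(h := w)) c"
  shows "reach M (q, h, t) c"
  using reach_trans[OF reach_step[of q M t h w d q'] assms(3)] assms(1,2) by blast

lemma scanR:
  assumes "q \<noteq> 0" "M q True = (True, True, q)"
  shows "(\<forall>i. h \<le> i \<and> i < h + int n \<longrightarrow> t i) \<Longrightarrow> reach M (q, h, t) (q, h + int n, t)"
proof (induction n arbitrary: h)
  case 0 then show ?case by (simp add: reach_refl)
next
  case (Suc n)
  have th: "t h" using Suc.prems by simp
  have "reach M (q, h + 1, t) (q, h + 1 + int n, t)"
    using Suc.IH[of "h+1"] Suc.prems by simp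
  then have "reach M (q, h + 1, t(h := True)) (q, h + int (Suc n), t)"
    using th by (simp add: fun_upd_idem add.assoc)
  then show ?case
    using reach_step_trans[of q M t h True True q] assms th by simp
qed

lemma scanL:
  assumes "q \<noteq> 0" "M q True = (True, False, q)"
  shows "(\<forall>i. h - int n < i \<and> i \<le> h \<longrightarrow> t i) \<Longrightarrow> reach M (q, h, t) (q, h - int n, t)"
proof (induction n arbitrary: h)
  case 0 then show ?case by (simp add: reach_refl)
next
  case (Suc n)
  have th: "t h" using Suc.prems by simp
  have "reach M (q, h - 1, t) (q, h - 1 - int n, t)"
    using Suc.IH[of "h-1"] Suc.prems by simp
  then have "reach M (q, h - 1, t(h := True)) (q, h - int (Suc n), t)"
    using th by (simp add: fun_upd_idem algebra_simps)
  then show ?case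
    using reach_step_trans[of q M t h True False q] assms th by simp
qed

lemma reach_run: "reach M (1, 0, \<lambda>_. False) c \<Longrightarrow> \<exists>k. tm_run M k = c"
  unfolding reach_def tm_run_def by blast

definition BBM :: "nat \<Rightarrow> tm" where
  "BBM L q s =
    (if 1 \<le> q \<and> q \<le> L then (True, True, if q = L then L + 6 else q + 1)
     else if q = L + 1 then (if s then (True, False, L + 1) else (False, True, L + 2))
     else if q = L + 2 then (if s then (False, True, L + 3) else (False, True, 0))
     else if q = L + 3 then (if s then (True, True, L + 3) else (False, True, L + 4))
     else if q = L + 4 then (if s then (True, True, L + 4) else (True, True, L + 5))
     else if q = L + 5 then (True, False, L + 6)
     else if q = L + 6 then (if s then (True, False, L + 6) else (False, False, L + 1))
     else (False, False, 0))"

lemma BBM_snd: "snd (snd (BBM L q s)) \<le> L + 6"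
  unfolding BBM_def by simp

lemma BBM_valid: "tm_valid (L + 6) (BBM L)"
  unfolding tm_valid_def using BBM_snd by blast

lemma writer:
  assumes "1 \<le> L"
  shows "i \<le> L \<Longrightarrow> reach (BBM L) (1, 0, \<lambda>_. False)
     (if i < L then i + 1 else L + 6, int i, \<lambda>x. 0 \<le> x \<and> x < int i)"
proof (induction i)
  case 0
  have "(\<lambda>x::int. 0 \<le> x \<and> x < 0) = (\<lambda>_. False)" by auto
  then show ?case using assms by (simp add: reach_refl)
next
  case (Suc i)
  then have il: "i < L" by simp
  have IH: "reach (BBM L) (1, 0, \<lambda>_. False) (i + 1, int i, \<lambda>x. 0 \<le> x \<and> x < int i)"
    using Suc il by simp
  have m: "BBM L (i+1) ((\<lambda>x. 0 \<le> x \<and> x < int i) (int i)) =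
      (True, True, if Suc i < L then Suc i + 1 else L + 6)"
    using il by (simp add: BBM_def)
  have upd: "(\<lambda>x. 0 \<le> x \<and> x < int i)(int i := True) = (\<lambda>x. 0 \<le> x \<and> x < int (Suc i))"
    by (auto simp: fun_eq_iff)
  have "reach (BBM L) (i + 1, int i, \<lambda>x. 0 \<le> x \<and> x < int i)
      (if Suc i < L then Suc i + 1 else L + 6, int (Suc i), \<lambda>x. 0 \<le> x \<and> x < int (Suc i))"
    by (rule reach_step'[where w=True and d=True]) (use il in \<open>auto simp: BBM_def fun_eq_iff\<close>)
  then show ?case using reach_trans[OF IH] by simp
qed

definition tp :: "nat \<Rightarrow> nat \<Rightarrow> int \<Rightarrow> bool" where
  "tp L p = (\<lambda>x. (int p \<le> x \<and> x < int L) \<or> (int L + 1 \<le> x \<and> x < int L + 1 + 2 * int p))"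

lemma round:
  assumes "p < L"
  shows "reach (BBM L) (L + 6, int L, tp L p) (L + 6, int L, tp L (Suc p))"
proof -
  let ?M = "BBM L"
  let ?t = "tp L p"
  let ?t1 = "?t(int p := False)"
  let ?t2 = "?t1(int L + 1 + 2 * int p := True)"
  let ?t3 = "?t2(int L + 2 + 2 * int p := True)"
  have t3: "?t3 = tp L (Suc p)" using assms by (auto simp: tp_def fun_eq_iff)
  have s1: "reach ?M (L + 6, int L, ?t) (L + 1, int L - 1, ?t)"
    by (rule reach_step'[where w=False and d=False]) (use assms in \<open>auto simp: BBM_def tp_def fun_eq_iff\<close>)
  have s2: "reach ?M (L + 1, int L - 1, ?t) (L + 1, int L - 1 - int (L - p), ?t)"
    by (rule scanL) (use assms in \<open>auto simp: BBM_def tp_def\<close>)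
  have s3: "reach ?M (L + 1, int p - 1, ?t) (L + 2, int p, ?t)"
    by (rule reach_step'[where w=False and d=True]) (use assms in \<open>auto simp: BBM_def tp_def fun_eq_iff\<close>)
  have s4: "reach ?M (L + 2, int p, ?t) (L + 3, int p + 1, ?t1)"
    by (rule reach_step'[where w=False and d=True]) (use assms in \<open>auto simp: BBM_def tp_def fun_eq_iff\<close>)
  have s5: "reach ?M (L + 3, int p + 1, ?t1) (L + 3, int p + 1 + int (L - p - 1), ?t1)"
    by (rule scanR) (use assms in \<open>auto simp: BBM_def tp_def\<close>)
  have s6: "reach ?M (L + 3, int L, ?t1) (L + 4, int L + 1, ?t1)"
    by (rule reach_step'[where w=False and d=True]) (use assms in \<open>auto simp: BBM_def tp_def fun_eq_iff\<close>)
  have s7: "reach ?M (L + 4, int L + 1, ?t1) (L + 4, int L + 1 + int (2 * p), ?t1)"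
    by (rule scanR) (use assms in \<open>auto simp: BBM_def tp_def\<close>)
  have s8: "reach ?M (L + 4, int L + 1 + 2 * int p, ?t1) (L + 5, int L + 2 + 2 * int p, ?t2)"
    by (rule reach_step'[where w=True and d=True]) (use assms in \<open>auto simp: BBM_def tp_def fun_eq_iff\<close>)
  have s9: "reach ?M (L + 5, int L + 2 + 2 * int p, ?t2) (L + 6, int L + 1 + 2 * int p, ?t3)"
    by (rule reach_step'[where w=True and d=False]) (use assms in \<open>auto simp: BBM_def tp_def fun_eq_iff\<close>)
  have s10: "reach ?M (L + 6, int L + 1 + 2 * int p, ?t3) (L + 6, int L + 1 + 2 * int p - int (2 * p + 1), ?t3)"
    by (rule scanL) (use assms in \<open>auto simp: BBM_def tp_def\<close>)
  show ?thesis
    using reach_trans[OF s1 reach_trans[OF s2 reach_trans[OF _ reach_trans[OF s4 reach_trans[OF s5 reach_trans[OF _ reach_trans[OF s7 reach_trans[OF _ reach_trans[OF s9 s10]]]]]]]]]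
      s3 s6 s8 t3 assms
    by (simp add: algebra_simps of_nat_diff)
qed

lemma rounds:
  "p \<le> L \<Longrightarrow> reach (BBM L) (L + 6, int L, tp L 0) (L + 6, int L, tp L p)"
proof (induction p)
  case 0 then show ?case by (simp add: reach_refl)
next
  case (Suc p)
  then show ?case using round[of p L] reach_trans by simp
qed

lemma BBM_run:
  assumes "1 \<le> L"
  shows "\<exists>k. tm_run (BBM L) k = (0, int L + 1, tp L L)"
proof -
  have w: "reach (BBM L) (1, 0, \<lambda>_. False) (L + 6, int L, \<lambda>x. 0 \<le> x \<and> x < int L)"
    using writer[OF assms, of L] by simp
  have e: "(\<lambda>x. 0 \<le> x \<and> x < int L) = tp L 0" by (auto simp: tp_def fun_eq_iff)
  let ?M = "BBM L" let ?t = "tp L L"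
  have s1: "reach ?M (L + 6, int L, ?t) (L + 1, int L - 1, ?t)"
    by (rule reach_step'[where w=False and d=False]) (use assms in \<open>auto simp: BBM_def tp_def fun_eq_iff\<close>)
  have s2: "reach ?M (L + 1, int L - 1, ?t) (L + 2, int L, ?t)"
    by (rule reach_step'[where w=False and d=True]) (use assms in \<open>auto simp: BBM_def tp_def fun_eq_iff\<close>)
  have s3: "reach ?M (L + 2, int L, ?t) (0, int L + 1, ?t)"
    by (rule reach_step'[where w=False and d=True]) (use assms in \<open>auto simp: BBM_def tp_def fun_eq_iff\<close>)
  have "reach ?M (1, 0, \<lambda>_. False) (0, int L + 1, ?t)"
    using reach_trans[OF w[unfolded e] reach_trans[OF rounds[of L L] reach_trans[OF s1 reach_trans[OF s2 s3]]]]
    by simp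
  then show ?thesis by (rule reach_run)
qed

lemma bb_L6: "1 \<le> L \<Longrightarrow> 2 * L \<le> busy_beaver (L + 6)"
proof -
  assume L: "1 \<le> L"
  obtain k where k: "tm_run (BBM L) k = (0, int L + 1, tp L L)" using BBM_run[OF L] by blast
  have "{i. tp L L i} = {int L + 1 ..< int L + 1 + 2 * int L}" by (auto simp: tp_def)
  then have "tm_ones (tm_run (BBM L) k) = 2 * L" using k by (simp add: tm_ones_def)
  moreover have "tm_ones (tm_run (BBM L) k) \<le> busy_beaver (L + 6)"
    by (rule bb_ge[of "L+6"]) (use BBM_valid k in auto)
  ultimately show ?thesis by simp
qed

lemma bb_2: "1 \<le> busy_beaver 2"
proof -
  let ?M = "\<lambda>(q::nat) (s::bool). (True, True, 0::nat)"
  have r: "tm_run ?M 1 = (0, 1, (\<lambda>_. False)(0 := True))"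
    by (simp add: tm_run_def tm_step_def)
  have "{i. ((\<lambda>_. False)(0 := True)) i} = {0::int}" by auto
  then have "tm_ones (tm_run ?M 1) = 1" using r by (simp add: tm_ones_def)
  moreover have "tm_ones (tm_run ?M 1) \<le> busy_beaver 2"
    by (rule bb_ge[of 1]) (use r in \<open>auto simp: tm_valid_def\<close>)
  ultimately show ?thesis by simp
qed

lemma psi_ge_card: "finite D \<Longrightarrow> psi_ge D n \<Longrightarrow> n \<le> card D"
proof -
  assume f: "finite D" and "psi_ge D n"
  then obtain x where x: "\<forall>i\<in>{1..n}. x i \<in> D" "inj_on x {1..n}" by (auto simp: psi_ge_def)
  have "card (x ` {1..n}) = n" using x(2) by (simp add: card_image)
  moreover have "x ` {1..n} \<subseteq> D" using x(1) by auto
  ultimately show ?thesis using card_mono[OF f, of "x ` {1..n}"] by simp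
qed

lemma psi_le_card: "finite D \<Longrightarrow> psi_le D n \<Longrightarrow> card D \<le> n"
proof -
  assume f: "finite D" and "psi_le D n"
  then obtain x where x: "\<forall>y\<in>D. \<exists>i\<in>{1..n}. y = x i" by (auto simp: psi_le_def)
  then have "D \<subseteq> x ` {1..n}" by auto
  then have "card D \<le> card (x ` {1..n})" by (simp add: card_mono)
  also have "\<dots> \<le> n" using card_image_le[of "{1..n}" x] by simp
  finally show ?thesis .
qed

lemma psi_eq_card: "finite D \<Longrightarrow> psi_eq D (card D)"
proof -
  assume f: "finite D"
  obtain h where h: "bij_betw h {1..card D} D" using ex_bij_betw_nat_finite_1[OF f] by blast
  have "psi_ge D (card D)" unfolding psi_ge_def
    using h by (intro exI[of _ h]) (auto simp: bij_betw_def)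
  moreover have "psi_le D (card D)" unfolding psi_le_def
    using h by (intro exI[of _ h]) (auto simp: bij_betw_def)
  ultimately show ?thesis by (simp add: psi_eq_def)
qed

theorem lemma50:
  assumes "infinite (UNIV :: 'a set)"
  shows "\<not> smooth_T_bb TYPE('a)"
proof
  assume sm: "smooth_T_bb TYPE('a)"
  define b where "b = busy_beaver 2"
  have b1: "1 \<le> b" using bb_2 b_def by simp
  define L where "L = b + 5"
  define k where "k = L + 4"
  have bk: "2 * L \<le> busy_beaver (k + 2)"
    using bb_L6[of L] unfolding L_def k_def by (simp add: add.commute)
  have "\<not> {b + 1 ..< busy_beaver (k + 2)} \<subseteq> busy_beaver ` {3..k+1}"
  proof
    assume "{b + 1 ..< busy_beaver (k + 2)} \<subseteq> busy_beaver ` {3..k+1}"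
    then have "card {b + 1 ..< busy_beaver (k + 2)} \<le> card (busy_beaver ` {3..k+1})"
      by (intro card_mono) auto
    also have "\<dots> \<le> card {3..k+1}" by (rule card_image_le) simp
    finally show False using bk unfolding L_def k_def by simp
  qed
  then obtain m where m0: "m \<in> {b + 1 ..< busy_beaver (k + 2)}" "m \<notin> busy_beaver ` {3..k+1}"
    by blast
  then have m: "b < m" "m < busy_beaver (k + 2)" "m \<notin> busy_beaver ` {3..k+1}" by auto
  have mnot: "m \<noteq> busy_beaver i" if "i \<in> {2..k+2}" for i
  proof -
    have "i = 2 \<or> i = k + 2 \<or> i \<in> {3..k+1}" using that by auto
    then show ?thesis using m b_def by auto
  qed
  obtain D :: "'a set" where D: "finite D" "card D = b"
    using infinite_arbitrarily_large[OF assms] by blast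
  obtain K :: "'a set" where K: "finite K" "card K = m"
    using infinite_arbitrarily_large[OF assms] by blast
  have "D \<noteq> {}" using D b1 by auto
  then obtain d where d: "d \<in> D" by auto
  have TD: "T_bb_interp D (\<lambda>_. d)"
    unfolding T_bb_interp_def is_interp_def
  proof (intro conjI allI)
    fix k :: nat
    show "psi_ge D (busy_beaver (k + 2)) \<or> (\<exists>i\<in>{2..k + 2}. psi_eq D (busy_beaver i))"
      using psi_eq_card[OF D(1)] D(2) b_def by (intro disjI2 bexI[of _ 2]) auto
  qed (use d in auto)
  have "D \<lesssim> K" using D K m(1) by (simp add: lepoll_iff_card_le)
  then obtain D' :: "'a set" and v' where D': "T_bb_interp D' v'" "D' \<approx> K"
    using sm TD unfolding smooth_T_bb_def
    by (metis qf_sat.simps(1)[of "\<lambda>_. d" 0 0])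
  have fD': "finite D'" using D'(2) K(1) eqpoll_finite_iff by blast
  have cD': "card D' = m" using D'(2) K eqpoll_iff_card fD' by blast
  have "psi_ge D' (busy_beaver (k + 2)) \<or> (\<exists>i\<in>{2..k + 2}. psi_eq D' (busy_beaver i))"
    using D'(1) unfolding T_bb_interp_def by blast
  then show False
  proof
    assume "psi_ge D' (busy_beaver (k + 2))"
    then have "busy_beaver (k + 2) \<le> m" using psi_ge_card[OF fD'] cD' by simp
    then show False using m(2) by simp
  next
    assume "\<exists>i\<in>{2..k + 2}. psi_eq D' (busy_beaver i)"
    then obtain i where i: "i \<in> {2..k+2}" "psi_eq D' (busy_beaver i)" by blast
    then have "busy_beaver i = m"
      using psi_ge_card[OF fD'] psi_le_card[OF fD'] cD' unfolding psi_eq_def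
      by (metis le_antisym)
    then show False using mnot[OF i(1)] by simp
  qed
qed

end
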